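(* Let $k\ge3$. Then $$J_{-1}E\equiv \beta\, L(-2)^2E \pmod{C_2(V_L^+)},\qquad \beta=\frac{64k^2-16k-18}{(4k-1)(4k-9)}.$$
   Context: $L=\mathbb{Z}\alpha$, $\langle\alpha,\alpha\rangle=2k$; $V_L=M(1)\otimes\mathbb{C}[L]$ the lattice VOA with conformal vector $\omega=\frac1{4k}\alpha(-1)^2\mathbf1$, $L(n)=\omega_{n+1}$; $V_L^+$ the fixed points of the involution $\theta$ lifted from $-1$ on $L$; $E=e^{\alpha}+e^{-\alpha}$; $J=\frac{1}{4k^2}\alpha(-1)^4\mathbf1-\frac1k\alpha(-3)\alpha(-1)\mathbf1+\frac{3}{4k}\alpha(-2)^2\mathbf1$ and $J_{-1}$ is its $(-1)$-mode. $C_2(V)$ is the span of $\{v_{-2}u:u,v\in V\}$. *)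

theory Defs
  imports Complex_Main "HOL-Library.Multiset" "HOL-Library.Function_Algebras"
begin

text \<open>Concrete model of the rank-one lattice VOA V_L, L = Z alpha, <alpha,alpha> = 2k.
  Basis of V_L = M(1) (x) C[L]: a key (M, a) stands for the monomial
  alpha(-n1) ... alpha(-nr) e^(a alpha), where M = {#n1,...,nr#} (all ni >= 1).
  The 2-cocycle is trivial (valid since L is even of rank one).\<close>

type_synonym key = "nat multiset \<times> int"
type_synonym vec = "key \<Rightarrow> complex"

definition single :: "key \<Rightarrow> vec" where
  "single x = (\<lambda>y. if y = x then 1 else 0)"

definition smul :: "complex \<Rightarrow> vec \<Rightarrow> vec" where
  "smul c f = (\<lambda>y. c * f y)"

definition supp :: "vec \<Rightarrow> key set" where
  "supp f = {x. f x \<noteq> 0}"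

definition lin :: "(key \<Rightarrow> vec) \<Rightarrow> vec \<Rightarrow> vec" where
  "lin T f = (\<Sum>x\<in>supp f. smul (f x) (T x))"

definition fsum :: "(nat \<Rightarrow> vec) \<Rightarrow> vec" where
  "fsum g = (\<Sum>i\<in>{i. g i \<noteq> 0}. g i)"

text \<open>Heisenberg operators alpha(m): [alpha(m),alpha(n)] = 2k m delta_{m+n,0},
  alpha(0) e^(b alpha) = 2kb e^(b alpha)\<close>
definition heis_basis :: "nat \<Rightarrow> int \<Rightarrow> key \<Rightarrow> vec" where
  "heis_basis k m x = (case x of (M, b) \<Rightarrow>
     if m < 0 then single (add_mset (nat (- m)) M, b)
     else if m = 0 then smul (of_int (2 * int k * b)) (single (M, b))
     else smul (of_int (2 * int k * m * int (count M (nat m)))) (single (M - {#nat m#}, b)))"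

definition heis :: "nat \<Rightarrow> int \<Rightarrow> vec \<Rightarrow> vec" where
  "heis k m = lin (heis_basis k m)"

text \<open>partitions of s, and the coefficient prod_n (c/n)^(c_n) / c_n! of exp(sum_n c X_n / n)\<close>
definition parts :: "nat \<Rightarrow> nat multiset set" where
  "parts s = {p. (\<forall>n\<in>#p. 0 < n) \<and> sum_mset p = s}"

definition pcoeff :: "complex \<Rightarrow> nat multiset \<Rightarrow> complex" where
  "pcoeff c p = prod_mset (image_mset (\<lambda>n. c / of_nat n) p)
                / (\<Prod>n\<in>set_mset p. of_nat (fact (count p n)))"

text \<open>z^(-s) coefficient of E^+(-a alpha, z) = exp(- sum_{n>0} a alpha(n)/n z^(-n))\<close>
definition Tpart :: "nat \<Rightarrow> int \<Rightarrow> nat \<Rightarrow> vec \<Rightarrow> vec" where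
  "Tpart k a s f = (\<Sum>p\<in>parts s. smul (pcoeff (- of_int a) p)
      (foldr (\<lambda>n g. heis k (int n) g) (sorted_list_of_multiset p) f))"

text \<open>z^r coefficient of E^-(-a alpha, z) = exp(sum_{n>0} a alpha(-n)/n z^n)\<close>
definition Spart :: "int \<Rightarrow> nat \<Rightarrow> vec \<Rightarrow> vec" where
  "Spart a r f = (\<Sum>p\<in>parts r. smul (pcoeff (of_int a) p)
      (lin (\<lambda>x. case x of (M, b) \<Rightarrow> single (M + p, b)) f))"

text \<open>modes of Y(e^(a alpha), z) = E^-(-a alpha,z) E^+(-a alpha,z) e_(a alpha) z^(a alpha):
  (e^(a alpha))_q is the coefficient of z^(-q-1)\<close>
definition emode_basis :: "nat \<Rightarrow> int \<Rightarrow> int \<Rightarrow> key \<Rightarrow> vec" where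
  "emode_basis k a q x = (case x of (M, b) \<Rightarrow>
     fsum (\<lambda>s. let r = int s - q - 1 - 2 * int k * a * b in
                 if r < 0 then 0 else Spart a (nat r) (Tpart k a s (single (M, a + b)))))"

definition emode :: "nat \<Rightarrow> int \<Rightarrow> int \<Rightarrow> vec \<Rightarrow> vec" where
  "emode k a q = lin (emode_basis k a q)"

text \<open>modes of Y(alpha(-n1)...alpha(-nr) e^(a alpha), z), via the iterate formula
  (alpha(-n)v)_q = sum_{i>=0} C(n+i-1,i) (alpha(-n-i) v_(q+i) - (-1)^n v_(q-n-i) alpha(i))\<close>
primrec Ylist :: "nat \<Rightarrow> nat list \<Rightarrow> int \<Rightarrow> int \<Rightarrow> vec \<Rightarrow> vec" where
  "Ylist k [] a q w = emode k a q w"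
| "Ylist k (n # ns) a q w =
     fsum (\<lambda>i. smul (of_nat ((n + i - 1) choose i))
        (heis k (- int n - int i) (Ylist k ns a (q + int i) w)
         - smul ((-1) ^ n) (Ylist k ns a (q - int n - int i) (heis k (int i) w))))"

definition mode :: "nat \<Rightarrow> vec \<Rightarrow> int \<Rightarrow> vec \<Rightarrow> vec" where
  "mode k v q w = (\<Sum>x\<in>supp v. smul (v x) (Ylist k (sorted_list_of_multiset (fst x)) (snd x) q w))"

definition VL :: "vec set" where
  "VL = {f. finite (supp f) \<and> (\<forall>x\<in>supp f. 0 \<notin># fst x)}"

definition theta :: "vec \<Rightarrow> vec" where
  "theta f = (\<lambda>(M, a). (-1) ^ size M * f (M, - a))"

definition VLplus :: "vec set" where
  "VLplus = {f \<in> VL. theta f = f}"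

definition vspan :: "vec set \<Rightarrow> vec set" where
  "vspan S = {x. \<exists>(n::nat) c g. (\<forall>i<n. g i \<in> S) \<and> x = (\<Sum>i<n. smul (c i) (g i))}"

definition C2 :: "nat \<Rightarrow> vec set \<Rightarrow> vec set" where
  "C2 k V = vspan {mode k v (-2) u | v u. v \<in> V \<and> u \<in> V}"

definition vac :: vec where "vac = single ({#}, 0)"

definition omega :: "nat \<Rightarrow> vec" where
  "omega k = smul (1 / (4 * of_nat k)) (heis k (-1) (heis k (-1) vac))"

definition Lop :: "nat \<Rightarrow> int \<Rightarrow> vec \<Rightarrow> vec" where
  "Lop k n = mode k (omega k) (n + 1)"

definition Evec :: vec where "Evec = single ({#}, 1) + single ({#}, -1)"

definition Jvec :: "nat \<Rightarrow> vec" where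
  "Jvec k = smul (1 / (4 * of_nat k ^ 2)) (heis k (-1) (heis k (-1) (heis k (-1) (heis k (-1) vac))))
          - smul (1 / of_nat k) (heis k (-3) (heis k (-1) vac))
          + smul (3 / (4 * of_nat k)) (heis k (-2) (heis k (-2) vac))"

end

theory Submission
  imports Defs
begin


lemma choose_numeral_simp[simp]:
  "n choose (numeral k) = n * ((n - 1) choose (pred_numeral k)) div (numeral k)"
proof -
  have "numeral k = Suc (pred_numeral k)" by simp
  then show ?thesis using binomial_absorption[of "pred_numeral k" n]
    by (metis nonzero_mult_div_cancel_left zero_neq_numeral)
qed

lemma smul_add: "smul c (f + g) = smul c f + smul c g"
  by (simp add: smul_def fun_eq_iff distrib_left)
lemma smul_left_add: "smul (a + b) f = smul a f + smul b f"
  by (simp add: smul_def fun_eq_iff distrib_right)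
lemma smul_zero[simp]: "smul c 0 = 0" by (simp add: smul_def fun_eq_iff)
lemma smul_0[simp]: "smul 0 f = 0" by (simp add: smul_def fun_eq_iff)
lemma smul_1[simp]: "smul 1 f = f" by (simp add: smul_def fun_eq_iff)
lemma smul_smul[simp]: "smul a (smul b f) = smul (a*b) f" by (simp add: smul_def fun_eq_iff)
lemma smul_diff: "smul c (f - g) = smul c f - smul c g"
  by (simp add: smul_def fun_eq_iff right_diff_distrib)
lemma sum_fun_apply: "(sum f A) y = (\<Sum>x\<in>A. f x y)"
  by (induction A rule: infinite_finite_induct) simp_all
lemma smul_sum: "smul c (sum f A) = (\<Sum>x\<in>A. smul c (f x))"
  by (simp add: fun_eq_iff smul_def sum_fun_apply sum_distrib_left)

lemma eta_zero[simp]: "(\<lambda>a. 0) = (0::vec)" by (simp add: fun_eq_iff)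
lemma eta_plus[simp]: "(\<lambda>a. f a + g a) = (f + g :: vec)" by (simp add: fun_eq_iff)
lemma eta_minus[simp]: "(\<lambda>a. f a - g a) = (f - g :: vec)" by (simp add: fun_eq_iff)

lemma supp_add: "supp (f+g) \<subseteq> supp f \<union> supp g" by (auto simp: supp_def)
lemma supp_smul: "supp (smul c f) \<subseteq> supp f" by (auto simp: supp_def smul_def)
lemma supp_single[simp]: "supp (single x) = {x}" by (auto simp: supp_def single_def)
lemma supp_zero[simp]: "supp 0 = {}" by (auto simp: supp_def)

lemma lin_eq: assumes "finite S" "supp f \<subseteq> S" shows "lin T f = (\<Sum>x\<in>S. smul (f x) (T x))"
  unfolding lin_def by (rule sum.mono_neutral_left) (use assms in \<open>auto simp: supp_def\<close>)

lemma lin_add: assumes "finite (supp f)" "finite (supp g)" shows "lin T (f+g) = lin T f + lin T g"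
proof -
  let ?S = "supp f \<union> supp g"
  have "lin T (f+g) = (\<Sum>x\<in>?S. smul ((f+g) x) (T x))" using assms supp_add by (intro lin_eq) auto
  also have "\<dots> = (\<Sum>x\<in>?S. smul (f x) (T x)) + (\<Sum>x\<in>?S. smul (g x) (T x))"
    by (simp add: smul_left_add sum.distrib)
  also have "\<dots> = lin T f + lin T g"
  proof -
    have "lin T f = (\<Sum>x\<in>?S. smul (f x) (T x))" using assms by (intro lin_eq) auto
    moreover have "lin T g = (\<Sum>x\<in>?S. smul (g x) (T x))" using assms by (intro lin_eq) auto
    ultimately show ?thesis by simp
  qed
  finally show ?thesis .
qed

lemma lin_smul: assumes "finite (supp f)" shows "lin T (smul c f) = smul c (lin T f)"
proof -
  have "lin T (smul c f) = (\<Sum>x\<in>supp f. smul ((smul c f) x) (T x))" using assms supp_smul by (intro lin_eq) auto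
  also have "\<dots> = smul c (lin T f)" by (simp add: lin_def smul_sum) (simp add: smul_def)
  finally show ?thesis .
qed

lemma lin_single[simp]: "lin T (single x) = T x"
  by (simp add: lin_def) (simp add: single_def)
lemma lin_zero[simp]: "lin T 0 = 0"
  by (simp add: lin_def)

lemma lin_id: assumes "finite (supp f)" shows "lin single f = f"
proof
  fix y
  have "lin single f y = (\<Sum>x\<in>supp f. f x * single x y)" by (simp add: lin_def sum_fun_apply smul_def)
  also have "\<dots> = (\<Sum>x\<in>supp f. if x = y then f y else 0)"
    by (rule sum.cong) (auto simp: single_def)
  also have "\<dots> = f y" using assms
    by (simp add: supp_def)
  finally show "lin single f y = f y" .
qed

type_synonym tm = "complex \<times> (nat list \<times> int)"

definition tv :: "tm \<Rightarrow> vec" where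
  "tv t = smul (fst t) (single (mset (fst (snd t)), snd (snd t)))"

definition vl :: "tm list \<Rightarrow> vec" where
  "vl xs = sum_list (map tv xs)"

lemma vl_Nil[simp]: "vl [] = 0" by (simp add: vl_def)
lemma vl_Cons: "vl (x#xs) = tv x + vl xs" by (simp add: vl_def)
lemma vl_append[simp]: "vl (xs @ ys) = vl xs + vl ys" by (simp add: vl_def)
lemma vl_concat: "vl (concat xss) = sum_list (map vl xss)"
  by (induction xss) simp_all

lemma fin_vl: "finite (supp (vl xs))"
proof (induction xs)
  case Nil then show ?case by simp
next
  case (Cons x xs)
  have "supp (tv x) \<subseteq> {(mset (fst (snd x)), snd (snd x))}"
    using supp_smul unfolding tv_def by fastforce
  then have "finite (supp (tv x))" using finite_subset by blast
  then show ?case using Cons supp_add[of "tv x" "vl xs"]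
    by (simp add: vl_Cons) (meson finite_UnI rev_finite_subset)
qed

lemma lin_vl: "lin T (vl xs) = sum_list (map (\<lambda>t. smul (fst t) (T (mset (fst (snd t)), snd (snd t)))) xs)"
proof (induction xs)
  case Nil then show ?case by simp
next
  case (Cons x xs)
  have f1: "finite (supp (tv x))"
    using fin_vl[of "[x]"] by (simp add: vl_Cons)
  have "lin T (vl (x#xs)) = lin T (tv x) + lin T (vl xs)"
    by (simp only: vl_Cons lin_add[OF f1 fin_vl])
  then show ?case using Cons by (simp add: tv_def lin_smul)
qed

definition scaleT :: "complex \<Rightarrow> tm list \<Rightarrow> tm list" where
  "scaleT c xs = map (\<lambda>t. (c * fst t, snd t)) xs"

lemma scaleT_simps[simp]: "scaleT c [] = []" "scaleT c (x#xs) = (c * fst x, snd x) # scaleT c xs"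
  by (simp_all add: scaleT_def)

lemma vl_scaleT: "vl (scaleT c xs) = smul c (vl xs)"
  by (induction xs) (simp_all add: vl_Cons smul_add tv_def)

lemma smul_vl: "smul c (vl xs) = vl (scaleT c xs)" by (simp add: vl_scaleT)
lemma add_vl: "vl xs + vl ys = vl (xs @ ys)" by simp
lemma diff_vl: "vl xs - vl ys = vl (xs @ scaleT (-1) ys)"
  by (simp add: vl_scaleT smul_def fun_eq_iff)


lemma vl_single: "vl [(c, (l, b))] = smul c (single (mset l, b))"
  by (simp add: vl_Cons tv_def)

lemma sum_list_map_vl: "sum_list (map (\<lambda>t. vl (f t)) xs) = vl (concat (map f xs))"
  by (simp add: vl_concat o_def)

definition heisT :: "nat \<Rightarrow> int \<Rightarrow> tm \<Rightarrow> tm list" where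
  "heisT k m t = (if m < 0 then [(fst t, (insort (nat (-m)) (fst (snd t)), snd (snd t)))]
     else if m = 0 then (if snd (snd t) = 0 then [] else [(fst t * of_int (2 * int k * snd (snd t)), snd t)])
     else if count_list (fst (snd t)) (nat m) = 0 then []
     else [(fst t * of_int (2 * int k * m * int (count_list (fst (snd t)) (nat m))),
            (remove1 (nat m) (fst (snd t)), snd (snd t)))])"

definition heisL :: "nat \<Rightarrow> int \<Rightarrow> tm list \<Rightarrow> tm list" where
  "heisL k m xs = concat (map (heisT k m) xs)"

lemma heisL_simps[simp]: "heisL k m [] = []" "heisL k m (t # xs) = heisT k m t @ heisL k m xs"
  by (simp_all add: heisL_def)

lemma heisT_vl: "smul (fst t) (heis_basis k m (mset (fst (snd t)), snd (snd t))) = vl (heisT k m t)"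
proof -
  obtain c l b where t: "t = (c, (l, b))" by (cases t) auto
  show ?thesis
    by (auto simp: t heis_basis_def heisT_def vl_single count_mset)
qed

lemma heis_vl: "heis k m (vl xs) = vl (heisL k m xs)"
proof -
  have "heis k m (vl xs) = sum_list (map (\<lambda>t. vl (heisT k m t)) xs)"
    unfolding heis_def lin_vl heisT_vl ..
  then show ?thesis by (simp add: sum_list_map_vl heisL_def)
qed

lemma heis_zero[simp]: "heis k m 0 = 0" by (simp add: heis_def)

lemma heis_pos_empty: "0 < n \<Longrightarrow> heis k (int n) (single ({#}, a)) = 0"
  by (simp add: heis_def heis_basis_def)

lemma foldr_heis_empty:
  "(\<forall>n\<in>set l. 0 < n) \<Longrightarrow> l \<noteq> [] \<Longrightarrow> foldr (\<lambda>n g. heis k (int n) g) l (single ({#}, a)) = 0"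
proof (induction l)
  case Nil then show ?case by simp
next
  case (Cons n l)
  show ?case
  proof (cases "l = []")
    case True then show ?thesis using Cons by (simp add: heis_pos_empty)
  next
    case False then show ?thesis using Cons by simp
  qed
qed

lemma pos0: "(\<forall>x\<in>#p. 0 < (x::nat)) \<Longrightarrow> (\<forall>x\<in>#p. x = 0) \<Longrightarrow> p = {#}"
  by (metis less_not_refl multiset_nonemptyE)

lemma parts_0: "parts 0 = {{#}}"
  by (auto simp: parts_def pos0)

lemma parts_nonempty: "p \<in> parts s \<Longrightarrow> 0 < s \<Longrightarrow> p \<noteq> {#}"
  by (auto simp: parts_def)

lemma parts_1: "parts 1 = {{#1#}}"
proof
  show "{{#1#}} \<subseteq> parts 1" by (auto simp: parts_def)
  show "parts 1 \<subseteq> {{#1#}}"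
  proof
    fix p assume p: "p \<in> parts 1"
    then have "p \<noteq> {#}" using parts_nonempty by auto
    then obtain x p' where px: "p = add_mset x p'" by (metis multiset_cases)
    from p px have pos: "0 < x" "\<forall>n\<in>#p'. 0 < n" and sm: "x + sum_mset p' = 1" by (auto simp: parts_def)
    then have x1: "x = 1" and s0: "sum_mset p' = 0" by linarith+
    then have "p' = {#}" using pos pos0[of p'] by (simp only: sum_mset_0_iff)
    then show "p \<in> {{#1#}}" using px x1 by simp
  qed
qed

lemma pcoeff_empty[simp]: "pcoeff c {#} = 1" by (simp add: pcoeff_def)
lemma pcoeff_one: "pcoeff c {#Suc 0#} = c" by (simp add: pcoeff_def)
lemma pcoeff_zero: "p \<noteq> {#} \<Longrightarrow> pcoeff 0 p = 0"
  by (cases p) (auto simp: pcoeff_def)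

lemma Tpart_a0: "Tpart k 0 s f = (if s = 0 then f else 0)"
proof (cases "s = 0")
  case True then show ?thesis by (simp add: Tpart_def parts_0)
next
  case False
  then have "Tpart k 0 s f = (\<Sum>p\<in>parts s. 0)" unfolding Tpart_def
    by (intro sum.cong) (auto simp: pcoeff_zero parts_nonempty)
  then show ?thesis using False by simp
qed

lemma Tpart_vac: "Tpart k a s (single ({#}, a)) = (if s = 0 then single ({#}, a) else 0)"
proof (cases "s = 0")
  case True then show ?thesis by (simp add: Tpart_def parts_0)
next
  case False
  have "Tpart k a s (single ({#}, a)) = (\<Sum>p\<in>parts s. 0)" unfolding Tpart_def
  proof (intro sum.cong refl)
    fix p assume p: "p \<in> parts s"
    then have "p \<noteq> {#}" using False parts_nonempty by auto
    moreover have "\<forall>n\<in>set (sorted_list_of_multiset p). 0 < n" using p by (auto simp: parts_def)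
    moreover have "sorted_list_of_multiset p \<noteq> []" using \<open>p \<noteq> {#}\<close>
      by (metis mset_sorted_list_of_multiset mset.simps(1))
    ultimately show "smul (pcoeff (- of_int a) p) (foldr (\<lambda>n g. heis k (int n) g) (sorted_list_of_multiset p) (single ({#}, a))) = 0"
      by (subst foldr_heis_empty) auto
  qed
  then show ?thesis using False by simp
qed

lemma Spart_zero_vec[simp]: "Spart a r 0 = 0" by (simp add: Spart_def)

lemma case_single: "(\<lambda>x. case x of (M, b) \<Rightarrow> single (M + {#}, b)) = single"
  by (auto simp: fun_eq_iff split: prod.split)

lemma Spart_r0: "finite (supp f) \<Longrightarrow> Spart a 0 f = f"
  by (simp add: Spart_def parts_0 case_single lin_id del: add_mset_add_single)

lemma Spart_0a: assumes fin: "finite (supp f)" shows "Spart 0 r f = (if r = 0 then f else 0)"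
proof (cases "r = 0")
  case True then show ?thesis using Spart_r0[OF fin] by auto
next
  case False
  then have "Spart 0 r f = (\<Sum>p\<in>parts r. 0)" unfolding Spart_def
    by (intro sum.cong) (auto simp: pcoeff_zero parts_nonempty)
  then show ?thesis using False by simp
qed

lemma Spart_1_single: "Spart a (Suc 0) (single (M, b)) = smul (of_int a) (single (add_mset (Suc 0) M, b))"
  unfolding Spart_def One_nat_def[symmetric] parts_1 by (simp add: pcoeff_one)

lemma fsum_single: "(\<And>i. i \<noteq> j \<Longrightarrow> g i = 0) \<Longrightarrow> fsum g = g j"
proof -
  assume h: "\<And>i. i \<noteq> j \<Longrightarrow> g i = 0"
  have "fsum g = sum g {j}" unfolding fsum_def
    by (rule sum.mono_neutral_left) (use h in auto)
  then show ?thesis by simp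
qed

lemma fsum_upto: "(\<And>i. N \<le> i \<Longrightarrow> g i = 0) \<Longrightarrow> fsum g = (\<Sum>i<N. g i)"
proof -
  assume h: "\<And>i. N \<le> i \<Longrightarrow> g i = 0"
  show ?thesis unfolding fsum_def
    by (rule sum.mono_neutral_left) (use h in \<open>auto simp: not_less[symmetric]\<close>)
qed

lemma fsum_zero[simp]: "fsum (\<lambda>i. 0) = 0" by (simp add: fsum_def)

lemma emode_basis_0': "emode_basis k 0 q x = (if q = -1 then single x else 0)"
proof -
  obtain M b where x: "x = (M, b)" by (cases x) auto
  let ?g = "\<lambda>s. let r = int s - q - 1 - 2 * int k * 0 * b in
                 if r < 0 then 0 else Spart 0 (nat r) (Tpart k 0 s (single (M, 0 + b)))"
  have "fsum ?g = ?g 0"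
    by (rule fsum_single) (simp add: Tpart_a0 Let_def)
  also have "\<dots> = (if q = -1 then single (M, b) else 0)"
    by (auto simp: Tpart_a0 Spart_0a Let_def)
  finally show ?thesis by (simp add: emode_basis_def x)
qed

lemma emode_basis_0: "emode_basis k 0 q = (if q = -1 then single else (\<lambda>x. 0))"
  by (simp add: fun_eq_iff emode_basis_0')

lemma emode_0: "finite (supp f) \<Longrightarrow> emode k 0 q f = (if q = -1 then f else 0)"
  by (simp add: emode_def emode_basis_0 lin_id) (simp add: lin_def)

lemma emode_vac: "-2 \<le> q \<Longrightarrow> emode_basis k a q ({#}, 0) =
   (if q = -1 then single ({#}, a) else if q = -2 then smul (of_int a) (single ({#1#}, a)) else 0)"
proof -
  assume q: "-2 \<le> q"
  let ?g = "\<lambda>s. let r = int s - q - 1 - 2 * int k * a * 0 in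
                 if r < 0 then 0 else Spart a (nat r) (Tpart k a s (single ({#}, a + 0)))"
  have "emode_basis k a q ({#}, 0) = fsum ?g" unfolding emode_basis_def prod.case ..
  also have "fsum ?g = ?g 0"
    by (rule fsum_single) (simp add: Tpart_vac Let_def)
  also have "\<dots> = (if q = -1 then single ({#}, a) else if q = -2 then smul (of_int a) (single ({#1#}, a)) else 0)"
  proof -
    have "q = -1 \<or> q = -2 \<or> 0 \<le> q" using q by linarith
    then show ?thesis
      by (elim disjE) (simp_all add: Tpart_vac Spart_r0 Spart_1_single Let_def)
  qed
  finally show ?thesis .
qed

definition emodeT :: "int \<Rightarrow> int \<Rightarrow> tm \<Rightarrow> tm list" where
  "emodeT a q t = (if a = 0 then (if q = -1 then [t] else [])
     else if q = -1 then [(fst t, ([], a))] else if q = -2 then [(fst t * of_int a, ([1], a))] else [])"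

definition emL :: "int \<Rightarrow> int \<Rightarrow> tm list \<Rightarrow> tm list" where
  "emL a q xs = concat (map (emodeT a q) xs)"

lemma emL_simps: "emL a q [] = []" "emL a q (t # xs) = emodeT a q t @ emL a q xs"
  by (simp_all add: emL_def)

definition okc :: "int \<Rightarrow> int \<Rightarrow> tm list \<Rightarrow> bool" where
  "okc a q xs \<longleftrightarrow> (a = 0 \<or> (-2 \<le> q \<and> (\<forall>t\<in>set xs. snd t = ([], 0))))"

lemma emL_0: "emL 0 q xs = (if q = -1 then xs else [])"
  by (induction xs) (simp_all add: emodeT_def emL_simps)

lemma emode_vl: "okc a q xs \<Longrightarrow> emode k a q (vl xs) = vl (emL a q xs)"
proof (cases "a = 0")
  case True then show ?thesis by (simp add: emode_0 fin_vl emL_0)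
next
  case False
  assume ok: "okc a q xs"
  then have q: "-2 \<le> q" and v: "\<forall>t\<in>set xs. snd t = ([], 0)" using False by (auto simp: okc_def)
  have "emode k a q (vl xs) = sum_list (map (\<lambda>t. vl (emodeT a q t)) xs)"
    unfolding emode_def lin_vl
  proof (intro arg_cong[where f=sum_list] map_cong refl)
    fix t assume "t \<in> set xs"
    then have "snd t = ([], 0)" using v by auto
    then show "smul (fst t) (emode_basis k a q (mset (fst (snd t)), snd (snd t))) = vl (emodeT a q t)"
      using q False by (auto simp: emode_vac emodeT_def vl_single)
  qed
  then show ?thesis by (simp add: sum_list_map_vl emL_def)
qed


definition homL :: "int \<Rightarrow> tm list \<Rightarrow> bool" where
  "homL d xs \<longleftrightarrow> (\<forall>t\<in>set xs. int (sum_list (fst (snd t))) = d)"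

lemma homL_Nil[simp]: "homL d []" by (simp add: homL_def)
lemma homL_Cons[simp]: "homL d (t # xs) \<longleftrightarrow> int (sum_list (fst (snd t))) = d \<and> homL d xs"
  by (simp add: homL_def)
lemma homL_append[simp]: "homL d (xs @ ys) \<longleftrightarrow> homL d xs \<and> homL d ys"
  by (auto simp: homL_def)
lemma homL_scaleT[simp]: "homL d (scaleT c xs) \<longleftrightarrow> homL d xs"
  by (simp add: homL_def scaleT_def)
lemma homL_concat: "(\<And>x. x \<in> set ys \<Longrightarrow> homL d (f x)) \<Longrightarrow> homL d (concat (map f ys))"
  by (auto simp: homL_def)
lemma homL_neg: "homL d xs \<Longrightarrow> d < 0 \<Longrightarrow> xs = []"
  by (cases xs) (auto simp: homL_def)

lemma sum_list_insort: "sum_list (insort n l) = n + sum_list (l::nat list)"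
  by (metis mset_insort sum_mset.add_mset sum_mset_sum_list)

lemma sum_list_remove1': "n \<in> set l \<Longrightarrow> sum_list (remove1 n l) + n = sum_list (l::nat list)"
proof (induction l)
  case Nil then show ?case by simp
next
  case (Cons a l) then show ?case by auto
qed

lemma homL_heisT: "int (sum_list (fst (snd t))) = d \<Longrightarrow> homL (d - m) (heisT k m t)"
proof -
  assume d: "int (sum_list (fst (snd t))) = d"
  consider "m < 0" | "m = 0" | "m > 0" by linarith
  then show ?thesis
  proof cases
    case 1 then show ?thesis using d by (simp add: heisT_def sum_list_insort)
  next
    case 2 then show ?thesis using d by (simp add: heisT_def)
  next
    case 3
    show ?thesis
    proof (cases "count_list (fst (snd t)) (nat m) = 0")
      case True then show ?thesis using 3 by (simp add: heisT_def)
    next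
      case False
      then have "nat m \<in> set (fst (snd t))" by (metis count_list_0_iff)
      then have "sum_list (remove1 (nat m) (fst (snd t))) + nat m = sum_list (fst (snd t))"
        by (rule sum_list_remove1')
      then show ?thesis using 3 d False by (simp add: heisT_def)
    qed
  qed
qed

lemma homL_heisL: "homL d xs \<Longrightarrow> homL (d - m) (heisL k m xs)"
  by (induction xs) (simp_all add: homL_heisT)

lemma heisL_vac: "(\<forall>t\<in>set xs. snd t = ([], 0)) \<Longrightarrow> heisL k (int i) xs = []"
  by (induction xs) (auto simp: heisT_def)

lemma homL_emL: "homL d xs \<Longrightarrow> okc a q xs \<Longrightarrow> homL (d - q - 1) (emL a q xs)"
proof (induction xs)
  case Nil then show ?case by (simp add: emL_simps)
next
  case (Cons t xs)
  have "homL (d - q - 1) (emL a q xs)" using Cons.prems by (intro Cons.IH) (auto simp: okc_def)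
  moreover have "homL (d - q - 1) (emodeT a q t)"
    using Cons.prems by (auto simp: emodeT_def okc_def)
  ultimately show ?case by (simp add: emL_simps)
qed

fun YT :: "nat \<Rightarrow> nat \<Rightarrow> int \<Rightarrow> nat list \<Rightarrow> int \<Rightarrow> tm list \<Rightarrow> tm list" where
  "YT k N a ns q [] = []"
| "YT k N a [] q (x # xs) = emL a q (x # xs)"
| "YT k N a (n # ns) q (x # xs) = concat (map (\<lambda>i.
      scaleT (of_nat ((n + i - 1) choose i))
        (heisL k (- int n - int i) (YT k N a ns (q + int i) (x # xs))
         @ scaleT (- ((-1) ^ n)) (YT k N a ns (q - int n - int i) (heisL k (int i) (x # xs))))) [0..<N])"

lemma okc_mono: "okc a q xs \<Longrightarrow> q \<le> q' \<Longrightarrow> okc a q' xs"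
  by (auto simp: okc_def)

lemma homL_YT: "homL d xs \<Longrightarrow> okc a q xs \<Longrightarrow> homL (d + int (sum_list ns) - q - 1) (YT k N a ns q xs)"
proof (induction ns arbitrary: d q xs)
  case Nil
  show ?case
  proof (cases xs)
    case Nil then show ?thesis by simp
  next
    case (Cons x xs')
    show ?thesis using homL_emL[OF Nil.prems] unfolding Cons by simp
  qed
next
  case (Cons n ns)
  show ?case
  proof (cases xs)
    case Nil then show ?thesis by simp
  next
    case (Cons x xs')
    have "homL (d + int (sum_list (n # ns)) - q - 1)
      (scaleT (of_nat ((n + i - 1) choose i))
        (heisL k (- int n - int i) (YT k N a ns (q + int i) xs)
         @ scaleT (- ((-1) ^ n)) (YT k N a ns (q - int n - int i) (heisL k (int i) xs))))" for i
    proof -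
      have "homL (d + int (sum_list ns) - (q + int i) - 1) (YT k N a ns (q + int i) xs)"
        using Cons.IH Cons.prems okc_mono by fastforce
      from homL_heisL[OF this, of "- int n - int i" k]
      have A: "homL (d + int (sum_list (n # ns)) - q - 1) (heisL k (- int n - int i) (YT k N a ns (q + int i) xs))"
        by (simp add: algebra_simps)
      have B: "homL (d + int (sum_list (n # ns)) - q - 1) (YT k N a ns (q - int n - int i) (heisL k (int i) xs))"
      proof (cases "a = 0")
        case True
        have "homL (d - int i) (heisL k (int i) xs)" using Cons.prems homL_heisL by blast
        moreover have "okc a (q - int n - int i) (heisL k (int i) xs)" using True by (simp add: okc_def)
        ultimately have "homL ((d - int i) + int (sum_list ns) - (q - int n - int i) - 1)
            (YT k N a ns (q - int n - int i) (heisL k (int i) xs))" using Cons.IH by blast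
        then show ?thesis by (simp add: algebra_simps)
      next
        case False
        then have "heisL k (int i) xs = []" using Cons.prems heisL_vac by (auto simp: okc_def)
        then show ?thesis by simp
      qed
      show ?thesis using A B by simp
    qed
    then show ?thesis unfolding \<open>xs = x # xs'\<close> YT.simps by (intro homL_concat) simp
  qed
qed

lemma Ylist_zero[simp]: "Ylist k ns a q 0 = 0"
  by (induction ns arbitrary: q) (simp_all add: emode_def)

lemma sum_vl_upt: "(\<Sum>i<N. vl (H i)) = vl (concat (map H [0..<N]))"
  by (induction N) (simp_all add: add_vl[symmetric] add.commute)

lemma vl_combine: "vl (scaleT C (A @ scaleT (- s) B)) = smul C (vl A - smul s (vl B))"
  by (simp add: vl_scaleT smul_def fun_eq_iff algebra_simps)

lemma YT_correct:
  "homL d xs \<Longrightarrow> okc a q xs \<Longrightarrow> d + 1 \<le> int N \<Longrightarrow> d + int (sum_list ns) - q \<le> int N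
   \<Longrightarrow> Ylist k ns a q (vl xs) = vl (YT k N a ns q xs)"
proof (induction ns arbitrary: d q xs)
  case Nil
  show ?case
  proof (cases xs)
    case Nil then show ?thesis by (simp add: emode_def)
  next
    case (Cons x xs')
    show ?thesis using emode_vl[OF Nil.prems(2), of k] unfolding Cons by simp
  qed
next
  case (Cons n ns)
  show ?case
  proof (cases xs)
    case Nil then show ?thesis by simp
  next
    case (Cons x xs')
    let ?H = "\<lambda>i. scaleT (of_nat ((n + i - 1) choose i))
        (heisL k (- int n - int i) (YT k N a ns (q + int i) xs)
         @ scaleT (- ((-1) ^ n)) (YT k N a ns (q - int n - int i) (heisL k (int i) xs)))"
    let ?G = "\<lambda>i. smul (of_nat ((n + i - 1) choose i))
       (heis k (- int n - int i) (Ylist k ns a (q + int i) (vl xs)) -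
        smul ((-1) ^ n) (Ylist k ns a (q - int n - int i) (heis k (int i) (vl xs))))"
    have GH: "?G i = vl (?H i)" for i
    proof -
      have 1: "Ylist k ns a (q + int i) (vl xs) = vl (YT k N a ns (q + int i) xs)"
        using Cons.IH[where d=d and q="q + int i" and xs=xs] Cons.prems okc_mono by auto
      have 2: "Ylist k ns a (q - int n - int i) (vl (heisL k (int i) xs)) =
               vl (YT k N a ns (q - int n - int i) (heisL k (int i) xs))"
      proof (cases "a = 0")
        case True
        have "homL (d - int i) (heisL k (int i) xs)" using Cons.prems homL_heisL by blast
        moreover have "okc a (q - int n - int i) (heisL k (int i) xs)" using True by (simp add: okc_def)
        ultimately show ?thesis using Cons.IH[where d="d - int i" and q="q - int n - int i" and xs="heisL k (int i) xs"] Cons.prems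
          by simp
      next
        case False
        then have "heisL k (int i) xs = []" using Cons.prems heisL_vac by (auto simp: okc_def)
        then show ?thesis by simp
      qed
      show ?thesis by (simp only: vl_combine heis_vl 1 2)
    qed
    have Hz: "?H i = []" if "N \<le> i" for i
    proof -
      have "homL (d + int (sum_list ns) - (q + int i) - 1) (YT k N a ns (q + int i) xs)"
        using homL_YT Cons.prems okc_mono by fastforce
      moreover have "d + int (sum_list ns) - (q + int i) - 1 < 0" using Cons.prems that by simp
      ultimately have a1: "YT k N a ns (q + int i) xs = []" using homL_neg by blast
      have "homL (d - int i) (heisL k (int i) xs)" using Cons.prems homL_heisL by blast
      moreover have "d - int i < 0" using Cons.prems that by simp
      ultimately have a2: "heisL k (int i) xs = []" using homL_neg by blast
      show ?thesis by (simp add: a1 a2)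
    qed
    have "Ylist k (n # ns) a q (vl xs) = fsum ?G" by simp
    also have "\<dots> = fsum (\<lambda>i. vl (?H i))" using GH by presburger
    also have "\<dots> = (\<Sum>i<N. vl (?H i))" by (rule fsum_upto) (simp only: Hz vl_Nil)
    also have "\<dots> = vl (concat (map ?H [0..<N]))" by (rule sum_vl_upt)
    also have "\<dots> = vl (YT k N a (n # ns) q xs)" unfolding \<open>xs = x # xs'\<close> YT.simps ..
    finally show ?thesis .
  qed
qed

definition dg :: "tm list \<Rightarrow> int" where
  "dg xs = (case xs of [] \<Rightarrow> 0 | t # _ \<Rightarrow> int (sum_list (fst (snd t))))"

lemma Ylist_vl: "homL (dg xs) xs \<Longrightarrow> okc a q xs \<Longrightarrow>
  Ylist k ns a q (vl xs) = vl (YT k (nat (max (dg xs + 1) (dg xs + int (sum_list ns) - q))) a ns q xs)"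
proof -
  assume h: "homL (dg xs) xs" "okc a q xs"
  have "0 \<le> dg xs" by (simp add: dg_def split: list.split)
  then show ?thesis by (intro YT_correct[OF h]) auto
qed

lemma mode_vl: "mode k (vl vs) q w =
  sum_list (map (\<lambda>t. smul (fst t) (Ylist k (sort (fst (snd t))) (snd (snd t)) q w)) vs)"
proof -
  have "mode k (vl vs) q w = lin (\<lambda>x. Ylist k (sorted_list_of_multiset (fst x)) (snd x) q w) (vl vs)"
    by (simp add: mode_def lin_def)
  then show ?thesis by (simp add: lin_vl)
qed


fun mergeIn :: "tm \<Rightarrow> tm list \<Rightarrow> tm list" where
  "mergeIn t [] = [t]"
| "mergeIn t (u # us) = (if snd t = snd u then (fst t + fst u, snd u) # us else u # mergeIn t us)"

definition mergeL :: "tm list \<Rightarrow> tm list" where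
  "mergeL xs = foldr mergeIn xs []"

lemma mergeL_simps: "mergeL [] = []" "mergeL (t # xs) = mergeIn t (mergeL xs)"
  by (simp_all add: mergeL_def)

lemma vl_mergeIn: "vl (mergeIn t us) = tv t + vl us"
proof (induction us)
  case Nil then show ?case by (simp add: vl_Cons)
next
  case (Cons u us)
  show ?case
  proof (cases "snd t = snd u")
    case True
    then show ?thesis by (simp add: vl_Cons tv_def smul_left_add add.assoc)
  next
    case False
    then show ?thesis using Cons by (simp add: vl_Cons add_ac)
  qed
qed

lemma vl_mergeL: "vl (mergeL xs) = vl xs"
  by (induction xs) (simp_all add: mergeL_simps vl_mergeIn vl_Cons)

lemma vl_zero_coeffs: "(\<forall>t\<in>set xs. fst t = 0) \<Longrightarrow> vl xs = 0"
  by (induction xs) (simp_all add: vl_Cons tv_def)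

lemma vl_eqI: "\<forall>t\<in>set (mergeL (xs @ scaleT (-1) ys)). fst t = 0 \<Longrightarrow> vl xs = vl ys"
proof -
  assume "\<forall>t\<in>set (mergeL (xs @ scaleT (-1) ys)). fst t = 0"
  then have "vl (xs @ scaleT (-1) ys) = 0" using vl_zero_coeffs vl_mergeL by metis
  then have "vl xs - vl ys = 0" by (simp add: diff_vl)
  then show ?thesis by simp
qed

lemma vac_vl: "vac = vl [(1, ([], 0))]" by (simp add: vac_def vl_single)
lemma Evec_vl: "Evec = vl [(1, ([], 1)), (1, ([], -1))]" by (simp add: Evec_def vl_Cons tv_def)

lemmas comp_simps = Lop_def omega_def vac_vl Evec_vl heis_vl smul_vl add_vl diff_vl mode_vl Ylist_vl
  YT.simps emL_simps heisT_def emodeT_def okc_def dg_def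


definition thetaL :: "tm list \<Rightarrow> tm list" where
  "thetaL xs = map (\<lambda>t. ((-1) ^ length (fst (snd t)) * fst t, (fst (snd t), - snd (snd t)))) xs"

lemma theta_add: "theta (f + g) = theta f + theta g"
  by (auto simp: theta_def fun_eq_iff distrib_left)
lemma theta_smul: "theta (smul c f) = smul c (theta f)"
  by (auto simp: theta_def fun_eq_iff smul_def)
lemma theta_zero: "theta 0 = 0"
  by (auto simp: theta_def fun_eq_iff)
lemma theta_single: "theta (single (M, b)) = smul ((-1) ^ size M) (single (M, - b))"
  by (auto simp: theta_def fun_eq_iff smul_def single_def)

lemma theta_vl: "theta (vl xs) = vl (thetaL xs)"
proof (induction xs)
  case Nil then show ?case by (simp add: thetaL_def theta_zero)
next
  case (Cons t xs)
  then show ?case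
    by (simp add: vl_Cons thetaL_def theta_add theta_smul theta_single tv_def mult.commute)
qed

lemma supp_vl: "supp (vl xs) \<subseteq> (\<lambda>t. (mset (fst (snd t)), snd (snd t))) ` set xs"
proof (induction xs)
  case Nil then show ?case by simp
next
  case (Cons t xs)
  have "supp (tv t) \<subseteq> {(mset (fst (snd t)), snd (snd t))}"
    using supp_smul unfolding tv_def by fastforce
  then show ?case using Cons supp_add[of "tv t" "vl xs"] by (auto simp: vl_Cons)
qed

lemma VLplus_vl:
  assumes "\<forall>t\<in>set xs. 0 \<notin> set (fst (snd t))"
    and "\<forall>t\<in>set (mergeL (thetaL xs @ scaleT (-1) xs)). fst t = 0"
  shows "vl xs \<in> VLplus"
proof -
  have "\<forall>x\<in>supp (vl xs). 0 \<notin># fst x"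
  proof
    fix x assume "x \<in> supp (vl xs)"
    then obtain t where "t \<in> set xs" "x = (mset (fst (snd t)), snd (snd t))" using supp_vl[of xs] by auto
    then show "0 \<notin># fst x" using assms(1) by auto
  qed
  then have "vl xs \<in> VL" unfolding VL_def using fin_vl by auto
  moreover have "theta (vl xs) = vl xs" using theta_vl vl_eqI[OF assms(2)] by simp
  ultimately show ?thesis by (simp add: VLplus_def)
qed


lemma main_identity: assumes k: "3 \<le> k" and Bd: "B = (4 * of_nat k - 1) * (4 * of_nat k - 9)" and Bnz: "(B::complex) \<noteq> 0" shows
 "mode k (Jvec k) (-1) Evec
           - smul ((64 * of_nat k ^ 2 - 16 * of_nat k - 18) / B)
                  (Lop k (-2) (Lop k (-2) Evec))
  = smul ((81/8 - 333/4 * of_nat k + 274 * of_nat k^2 - 276 * of_nat k^3 + 32 * of_nat k^4) / (of_nat k^2 * B))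
         (mode k (vl [(1, ([1,2], 0))]) (-2) Evec)
  + smul ((-27/2 * of_nat k + 72 * of_nat k^2 - 104 * of_nat k^3 + 128 * of_nat k^4) / (of_nat k^2 * B))
         (mode k (vl [(1, ([3], 1)), (-1, ([3], -1))]) (-2) vac)
  + smul ((-81/8 + 90 * of_nat k - 232 * of_nat k^2 + 64 * of_nat k^3) / (of_nat k^2 * B))
         (mode k (vl [(1, ([1,2], 1)), (1, ([1,2], -1))]) (-2) vac)
  + smul ((27/8 - 9 * of_nat k) / (of_nat k^2 * B))
         (mode k (vl [(1, ([1,1,1], 1)), (-1, ([1,1,1], -1))]) (-2) vac)"
proof -
  have k0: "0 < k" using k by simp
  have n3: "(of_nat k :: complex) \<noteq> 0" using k0 by simp
  show ?thesis
    using k0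
    apply (simp add: Jvec_def upt_rec comp_simps del: Ylist.simps)
    apply (rule vl_eqI)
    apply (simp add: mergeL_simps)
    using n3 Bnz
    apply (simp add: field_simps)
    apply (simp only: Bd)
    apply (intro conjI; algebra)
    done
qed


theorem corollary5p2:
  fixes k :: nat
  assumes "3 \<le> k"
  shows "mode k (Jvec k) (-1) Evec
           - smul ((64 * of_nat k ^ 2 - 16 * of_nat k - 18) / ((4 * of_nat k - 1) * (4 * of_nat k - 9)))
                  (Lop k (-2) (Lop k (-2) Evec))
         \<in> C2 k VLplus"
proof -
  define B :: complex where "B = (4 * of_nat k - 1) * (4 * of_nat k - 9)"
  have n1: "(4 * of_nat k - 1 :: complex) \<noteq> 0"
  proof
    assume "(4 * of_nat k - 1 :: complex) = 0"
    then have "(of_nat (4 * k) :: complex) = of_nat 1" by simp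
    then have "4 * k = 1" using of_nat_eq_iff by blast
    then show False by simp
  qed
  have n2: "(4 * of_nat k - 9 :: complex) \<noteq> 0"
  proof
    assume "(4 * of_nat k - 9 :: complex) = 0"
    then have "(of_nat (4 * k) :: complex) = of_nat 9" by simp
    then have "4 * k = 9" using of_nat_eq_iff by blast
    then show False by presburger
  qed
  have Bnz: "B \<noteq> 0" using n1 n2 by (simp add: B_def)
  define c0 :: complex where "c0 = (81/8 - 333/4 * of_nat k + 274 * of_nat k^2 - 276 * of_nat k^3 + 32 * of_nat k^4) / (of_nat k^2 * B)"
  define c1 :: complex where "c1 = (-27/2 * of_nat k + 72 * of_nat k^2 - 104 * of_nat k^3 + 128 * of_nat k^4) / (of_nat k^2 * B)"
  define c2 :: complex where "c2 = (-81/8 + 90 * of_nat k - 232 * of_nat k^2 + 64 * of_nat k^3) / (of_nat k^2 * B)"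
  define c3 :: complex where "c3 = (27/8 - 9 * of_nat k) / (of_nat k^2 * B)"
  define v0 where "v0 = vl [(1, ([1,2], 0))]"
  define v1 where "v1 = vl [(1, ([3], 1)), (-1, ([3], -1))]"
  define v2 where "v2 = vl [(1, ([1,2], 1)), (1, ([1,2], -1))]"
  define v3 where "v3 = vl [(1, ([1,1,1], 1)), (-1, ([1,1,1], -1))]"
  let ?X = "mode k (Jvec k) (-1) Evec
           - smul ((64 * of_nat k ^ 2 - 16 * of_nat k - 18) / ((4 * of_nat k - 1) * (4 * of_nat k - 9)))
                  (Lop k (-2) (Lop k (-2) Evec))"
  have eq: "?X = smul c0 (mode k v0 (-2) Evec) + smul c1 (mode k v1 (-2) vac)
               + smul c2 (mode k v2 (-2) vac) + smul c3 (mode k v3 (-2) vac)"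
    using main_identity[OF assms B_def Bnz]
    unfolding c0_def c1_def c2_def c3_def v0_def v1_def v2_def v3_def B_def .
  let ?S = "{mode k v (-2) u | v u. v \<in> VLplus \<and> u \<in> VLplus}"
  have vacP: "vac \<in> VLplus" unfolding vac_vl
    by (rule VLplus_vl) (simp_all add: thetaL_def mergeL_simps)
  have EP: "Evec \<in> VLplus" unfolding Evec_vl
    by (rule VLplus_vl) (simp_all add: thetaL_def mergeL_simps)
  have v0P: "v0 \<in> VLplus" unfolding v0_def
    by (rule VLplus_vl) (simp_all add: thetaL_def mergeL_simps)
  have v1P: "v1 \<in> VLplus" unfolding v1_def
    by (rule VLplus_vl) (simp_all add: thetaL_def mergeL_simps)
  have v2P: "v2 \<in> VLplus" unfolding v2_def
    by (rule VLplus_vl) (simp_all add: thetaL_def mergeL_simps)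
  have v3P: "v3 \<in> VLplus" unfolding v3_def
    by (rule VLplus_vl) (simp_all add: thetaL_def mergeL_simps)
  define c where "c = (\<lambda>i. [c0, c1, c2, c3] ! i)"
  define g where "g = (\<lambda>i. [mode k v0 (-2) Evec, mode k v1 (-2) vac, mode k v2 (-2) vac, mode k v3 (-2) vac] ! i)"
  have gS: "\<forall>i<4. g i \<in> ?S"
  proof (intro allI impI)
    fix i :: nat assume "i < 4"
    then have "i = 0 \<or> i = 1 \<or> i = 2 \<or> i = 3" by auto
    then show "g i \<in> ?S" using v0P v1P v2P v3P vacP EP unfolding g_def by (elim disjE; simp; blast)
  qed
  have sumeq: "?X = (\<Sum>i<4. smul (c i) (g i))"
    unfolding eq c_def g_def by (simp add: eval_nat_numeral add.assoc)
  show ?thesis unfolding C2_def vspan_def using gS sumeq by blast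
qed

end
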